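(* Stable semantics is serialisable with the selection function $\alpha_{adm}(X,Y,Z)=X\cup Y\cup Z$ and the termination function $\beta_{st}(F,S)=1$ if $F=(\emptyset,\emptyset)$ and $\beta_{st}(F,S)=0$ otherwise.
   Context: An abstract argumentation framework (AF) is a pair $F=(A,R)$ with $A$ a finite subset of a fixed universal set of arguments $\mathfrak{A}$ and $R\subseteq A\times A$ ($a\to b$ means $(a,b)\in R$). For $S\subseteq A$: $S^+=\{a\mid \exists b\in S: b\to a\}$, $S^-=\{a\mid\exists b\in S: a\to b\}$; for sets $S,S'$, $S\to S'$ means $S^+\cap S'\neq\emptyset$. $S$ is admissible if it is conflict-free and every attacker of an element of $S$ is attacked by some element of $S$. A stable extension is an admissible set $E$ with $E\cup E^+=A$. An initial set is a non-empty admissible set with no non-empty admissible proper subset; $\mathrm{IS}(F)$ is the set of initial sets. An initial set $S$ is unattacked if $S^-=\emptyset$; unchallenged if $S^-\neq\emptyset$ and no $S'\in\mathrm{IS}(F)$ has $S'\to S$; challenged if some $S'\in\mathrm{IS}(F)$ has $S'\to S$. Write $\mathrm{IS}^{u}(F),\mathrm{IS}^{uc}(F),\mathrm{IS}^{c}(F)$ for these sets. The reduct is $F^S=(A',R\cap(A'\times A'))$ with $A'=A\setminus(S\cup S^+)$. A selection function $\alpha$ maps any three sets $X,Y,Z$ of sets of arguments to a subset of $X\cup Y\cup Z$; a termination function $\beta$ maps pairs $(F,S)$ to $\{0,1\}$. Transitions: $(F,S)\to(F^{S'},S\cup S')$ whenever $S'\in\alpha(\mathrm{IS}^u(F),\mathrm{IS}^{uc}(F),\mathrm{IS}^c(F))$.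 $(F,S)\leadsto^{\alpha,\beta}(F',S')$ means $(F',S')$ is reachable from $(F,S)$ in finitely many (possibly zero) transitions and $\beta(F',S')=1$. $\mathcal{E}^{\alpha,\beta}(F)$ is the set of all $S$ with $(F,\emptyset)\leadsto^{\alpha,\beta}(F',S)$ for some $F'$. A semantics $\sigma$ is serialisable with $\alpha,\beta$ if $\sigma(F)=\mathcal{E}^{\alpha,\beta}(F)$ for all AFs $F$. *)

theory Defs
  imports Main
begin

type_synonym 'a AF = "'a set \<times> ('a \<times> 'a) set"

definition is_AF :: "'a AF \<Rightarrow> bool" where
  "is_AF F \<longleftrightarrow> finite (fst F) \<and> snd F \<subseteq> fst F \<times> fst F"

definition plus_of :: "('a \<times> 'a) set \<Rightarrow> 'a set \<Rightarrow> 'a set" where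
  "plus_of R S = {a. \<exists>b\<in>S. (b, a) \<in> R}"

definition minus_of :: "('a \<times> 'a) set \<Rightarrow> 'a set \<Rightarrow> 'a set" where
  "minus_of R S = {a. \<exists>b\<in>S. (a, b) \<in> R}"

definition attacks_set :: "('a \<times> 'a) set \<Rightarrow> 'a set \<Rightarrow> 'a set \<Rightarrow> bool" where
  "attacks_set R S S' \<longleftrightarrow> plus_of R S \<inter> S' \<noteq> {}"

definition conflict_free :: "'a AF \<Rightarrow> 'a set \<Rightarrow> bool" where
  "conflict_free F S \<longleftrightarrow> (\<forall>a\<in>S. \<forall>b\<in>S. (a, b) \<notin> snd F)"

definition admissible :: "'a AF \<Rightarrow> 'a set \<Rightarrow> bool" where
  "admissible F S \<longleftrightarrow> S \<subseteq> fst F \<and> conflict_free F S \<and>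
     (\<forall>a\<in>S. \<forall>b. (b, a) \<in> snd F \<longrightarrow> (\<exists>c\<in>S. (c, b) \<in> snd F))"

definition stable :: "'a AF \<Rightarrow> 'a set set" where
  "stable F = {E. admissible F E \<and> E \<union> plus_of (snd F) E = fst F}"

definition initial_sets :: "'a AF \<Rightarrow> 'a set set" where
  "initial_sets F = {S. S \<noteq> {} \<and> admissible F S \<and>
     (\<forall>S'. S' \<subset> S \<and> S' \<noteq> {} \<longrightarrow> \<not> admissible F S')}"

definition IS_u :: "'a AF \<Rightarrow> 'a set set" where
  "IS_u F = {S \<in> initial_sets F. minus_of (snd F) S = {}}"

definition IS_uc :: "'a AF \<Rightarrow> 'a set set" where
  "IS_uc F = {S \<in> initial_sets F. minus_of (snd F) S \<noteq> {} \<and>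
     \<not> (\<exists>S'\<in>initial_sets F. attacks_set (snd F) S' S)}"

definition IS_c :: "'a AF \<Rightarrow> 'a set set" where
  "IS_c F = {S \<in> initial_sets F. \<exists>S'\<in>initial_sets F. attacks_set (snd F) S' S}"

definition reduct :: "'a AF \<Rightarrow> 'a set \<Rightarrow> 'a AF" where
  "reduct F S = (let A' = fst F - (S \<union> plus_of (snd F) S) in (A', snd F \<inter> (A' \<times> A')))"

type_synonym 'a sel_fun = "'a set set \<Rightarrow> 'a set set \<Rightarrow> 'a set set \<Rightarrow> 'a set set"
type_synonym 'a term_fun = "'a AF \<Rightarrow> 'a set \<Rightarrow> bool"

definition step :: "'a sel_fun \<Rightarrow> ('a AF \<times> 'a set) \<Rightarrow> ('a AF \<times> 'a set) \<Rightarrow> bool" where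
  "step \<alpha> c c' \<longleftrightarrow> (\<exists>S'. S' \<in> \<alpha> (IS_u (fst c)) (IS_uc (fst c)) (IS_c (fst c)) \<and>
      c' = (reduct (fst c) S', snd c \<union> S'))"

definition serial_ext :: "'a sel_fun \<Rightarrow> 'a term_fun \<Rightarrow> 'a AF \<Rightarrow> 'a set set" where
  "serial_ext \<alpha> \<beta> F = {S. \<exists>F'. (step \<alpha>)\<^sup>*\<^sup>* (F, {}) (F', S) \<and> \<beta> F' S}"

definition serialisable :: "('a AF \<Rightarrow> 'a set set) \<Rightarrow> 'a sel_fun \<Rightarrow> 'a term_fun \<Rightarrow> bool" where
  "serialisable \<sigma> \<alpha> \<beta> \<longleftrightarrow> (\<forall>F. is_AF F \<longrightarrow> \<sigma> F = serial_ext \<alpha> \<beta> F)"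

definition alpha_adm :: "'a sel_fun" where
  "alpha_adm X Y Z = X \<union> Y \<union> Z"

definition beta_st :: "'a term_fun" where
  "beta_st F S \<longleftrightarrow> F = ({}, {})"

end

theory Submission
  imports Defs
begin

lemma alpha_IS: "alpha_adm (IS_u F) (IS_uc F) (IS_c F) = initial_sets F"
  unfolding alpha_adm_def IS_u_def IS_uc_def IS_c_def by auto

lemma step_iff: "step alpha_adm c c' \<longleftrightarrow>
   (\<exists>S'. S' \<in> initial_sets (fst c) \<and> c' = (reduct (fst c) S', snd c \<union> S'))"
  unfolding step_def alpha_IS by simp

lemma reduct_empty: "is_AF F \<Longrightarrow> reduct F {} = F"
  unfolding reduct_def is_AF_def plus_of_def by (cases F) auto

lemma adm_empty: "admissible F {}"
  unfolding admissible_def conflict_free_def by auto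

lemma adm_union:
  assumes "is_AF F" "admissible F S" "admissible (reduct F S) S'"
  shows "admissible F (S \<union> S')"
proof -
  obtain A R where F: "F = (A,R)" by (cases F)
  let ?A' = "A - (S \<union> plus_of R S)"
  have r: "reduct F S = (?A', R \<inter> (?A' \<times> ?A'))" unfolding reduct_def F Let_def by simp
  have RA: "R \<subseteq> A \<times> A" using assms(1) unfolding is_AF_def F by simp
  have S: "S \<subseteq> A" "\<forall>a\<in>S. \<forall>b\<in>S. (a, b) \<notin> R"
     "\<forall>a\<in>S. \<forall>b. (b, a) \<in> R \<longrightarrow> (\<exists>c\<in>S. (c, b) \<in> R)"
    using assms(2) unfolding admissible_def conflict_free_def F by auto
  have S'0: "S' \<subseteq> ?A'" "\<forall>a\<in>S'. \<forall>b\<in>S'. (a, b) \<notin> R \<inter> (?A' \<times> ?A')"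
     "\<forall>a\<in>S'. \<forall>b. (b, a) \<in> R \<inter> (?A' \<times> ?A') \<longrightarrow> (\<exists>c\<in>S'. (c, b) \<in> R \<inter> (?A' \<times> ?A'))"
    using assms(3) unfolding admissible_def conflict_free_def r fst_conv snd_conv by blast+
  have S': "S' \<subseteq> ?A'" "\<forall>a\<in>S'. \<forall>b\<in>S'. (a, b) \<notin> R"
     "\<forall>a\<in>S'. \<forall>b. (b, a) \<in> R \<inter> (?A' \<times> ?A') \<longrightarrow> (\<exists>c\<in>S'. (c, b) \<in> R)"
    using S'0 by blast+
  have cf: "\<forall>a\<in>S \<union> S'. \<forall>b\<in>S \<union> S'. (a, b) \<notin> R"
  proof (intro ballI)
    fix a b assume a: "a \<in> S \<union> S'" and b: "b \<in> S \<union> S'"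
    show "(a, b) \<notin> R"
    proof
      assume ab: "(a,b) \<in> R"
      show False
      proof (cases "a \<in> S")
        case True
        then show False using S S' ab b unfolding plus_of_def by blast
      next
        case False
        then have "a \<in> S'" using a by blast
        show False
        proof (cases "b \<in> S")
          case True
          then obtain c where "c \<in> S" "(c,a) \<in> R" using S(3) ab by blast
          then have "a \<in> plus_of R S" unfolding plus_of_def by blast
          then show False using \<open>a \<in> S'\<close> S'(1) by blast
        next
          case False
          then show ?thesis using \<open>a \<in> S'\<close> b S'(2) ab by blast
        qed
      qed
    qed
  qed
  have def: "\<forall>a\<in>S \<union> S'. \<forall>b. (b, a) \<in> R \<longrightarrow> (\<exists>c\<in>S \<union> S'. (c, b) \<in> R)"
  proof (intro ballI allI impI)
    fix a b assume a: "a \<in> S \<union> S'" and ba: "(b,a) \<in> R"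
    show "\<exists>c\<in>S \<union> S'. (c, b) \<in> R"
    proof (cases "a \<in> S")
      case True then show ?thesis using S(3) ba by blast
    next
      case False
      then have aS': "a \<in> S'" using a by blast
      show ?thesis
      proof (cases "b \<in> plus_of R S")
        case True then show ?thesis unfolding plus_of_def by blast
      next
        case False
        have "b \<notin> S"
        proof
          assume "b \<in> S"
          then have "a \<in> plus_of R S" using ba unfolding plus_of_def by blast
          then show False using aS' S'(1) by blast
        qed
        moreover have "b \<in> A" using RA ba by blast
        ultimately have "b \<in> ?A'" using False by blast
        moreover have "a \<in> ?A'" using aS' S'(1) by blast
        ultimately show ?thesis using S'(3) aS' ba by blast
      qed
    qed
  qed
  show ?thesis unfolding admissible_def conflict_free_def F using S(1) S'(1) cf def by auto
qed

lemma reduct_reduct: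
  assumes "admissible (reduct F S) S'"
  shows "reduct (reduct F S) S' = reduct F (S \<union> S')"
proof -
  obtain A R where F: "F = (A,R)" by (cases F)
  let ?A' = "A - (S \<union> plus_of R S)"
  have r: "reduct F S = (?A', R \<inter> (?A' \<times> ?A'))" unfolding reduct_def F Let_def by simp
  have S': "S' \<subseteq> ?A'" using assms unfolding admissible_def r by auto
  have p: "plus_of (R \<inter> (?A' \<times> ?A')) S' = plus_of R S' \<inter> ?A'"
    using S' unfolding plus_of_def by blast
  have pu: "plus_of R (S \<union> S') = plus_of R S \<union> plus_of R S'"
    unfolding plus_of_def by auto
  have A'': "?A' - (S' \<union> plus_of (R \<inter> (?A' \<times> ?A')) S') = A - ((S \<union> S') \<union> plus_of R (S \<union> S'))"
    unfolding p pu by blast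
  show ?thesis unfolding r unfolding reduct_def Let_def fst_conv snd_conv A'' F by (auto simp: pu)
qed

lemma sound:
  assumes "(step alpha_adm)\<^sup>*\<^sup>* (F,{}) c" "is_AF F"
  shows "fst c = reduct F (snd c) \<and> admissible F (snd c)"
  using assms(1)
proof (induction rule: rtranclp_induct)
  case base
  then show ?case using reduct_empty[OF assms(2)] adm_empty by simp
next
  case (step y z)
  then obtain S' where S': "S' \<in> initial_sets (fst y)" "z = (reduct (fst y) S', snd y \<union> S')"
    unfolding step_iff by blast
  have a: "admissible (reduct F (snd y)) S'" using S' step.IH unfolding initial_sets_def by auto
  show ?case using S'(2) step.IH reduct_reduct[OF a] adm_union[OF assms(2) _ a] by simp
qed

lemma exists_initial:
  assumes "finite E" "E \<noteq> {}" "admissible G E"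
  shows "\<exists>S'\<subseteq>E. S' \<in> initial_sets G"
  using assms
proof (induction "card E" arbitrary: E rule: less_induct)
  case less
  show ?case
  proof (cases "E \<in> initial_sets G")
    case True then show ?thesis by blast
  next
    case False
    then obtain T where T: "T \<subset> E" "T \<noteq> {}" "admissible G T"
      using less.prems unfolding initial_sets_def by blast
    have "card T < card E" using T(1) less.prems(1) by (simp add: psubset_card_mono)
    then obtain S' where "S' \<subseteq> T" "S' \<in> initial_sets G"
      using less.hyps[of T] T less.prems(1) finite_subset by (metis psubset_imp_subset)
    then show ?thesis using T(1) by blast
  qed
qed

lemma complete:
  assumes "is_AF G" "E \<in> stable G"
  shows "(step alpha_adm)\<^sup>*\<^sup>* (G, S) (({},{}), S \<union> E)"
  using assms
proof (induction "card (fst G)" arbitrary: G E S rule: less_induct)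
  case less
  obtain A R where G: "G = (A,R)" by (cases G)
  have fin: "finite A" and RA: "R \<subseteq> A \<times> A" using less.prems(1) unfolding is_AF_def G by auto
  have E: "admissible G E" "E \<union> plus_of R E = A" using less.prems(2) unfolding stable_def G by auto
  have EA: "E \<subseteq> A" using E(1) unfolding admissible_def G by simp
  have Ecf: "\<forall>a\<in>E. \<forall>b\<in>E. (a, b) \<notin> R" using E(1) unfolding admissible_def conflict_free_def G by simp
  have Edef: "\<forall>a\<in>E. \<forall>b. (b, a) \<in> R \<longrightarrow> (\<exists>c\<in>E. (c, b) \<in> R)"
    using E(1) unfolding admissible_def G by simp
  show ?case
  proof (cases "A = {}")
    case True
    then have "E = {}" "R = {}" using EA RA by auto
    then show ?thesis using True G by simp
  next
    case False
    then have "E \<noteq> {}" using E(2) unfolding plus_of_def by auto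
    then obtain S' where S': "S' \<subseteq> E" "S' \<in> initial_sets G"
      using exists_initial[OF finite_subset[OF EA fin] _ E(1)] by blast
    have S'ne: "S' \<noteq> {}" using S'(2) unfolding initial_sets_def by simp
    let ?A' = "A - (S' \<union> plus_of R S')"
    have r: "reduct G S' = (?A', R \<inter> (?A' \<times> ?A'))" unfolding reduct_def G Let_def by simp
    have st: "(step alpha_adm) (G, S) (reduct G S', S \<union> S')"
      unfolding step_iff fst_conv snd_conv using S'(2) by blast
    have isaf: "is_AF (reduct G S')" unfolding r is_AF_def using fin by auto
    have card: "card (fst (reduct G S')) < card (fst G)"
    proof -
      have "?A' \<subset> A" using S'ne S'(1) EA by blast
      moreover have "fst (reduct G S') = ?A'" using r by simp
      ultimately show ?thesis unfolding G fst_conv using fin by (simp add: psubset_card_mono)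
    qed
    have noatt: "E \<inter> plus_of R S' = {}" using Ecf S'(1) unfolding plus_of_def by blast
    have sub: "E - S' \<subseteq> ?A'" using EA noatt by blast
    have adm: "admissible (reduct G S') (E - S')"
      unfolding admissible_def conflict_free_def r
    proof (intro conjI)
      show "E - S' \<subseteq> fst (?A', R \<inter> ?A' \<times> ?A')" using sub by simp
      show "\<forall>a\<in>E - S'. \<forall>b\<in>E - S'. (a, b) \<notin> snd (?A', R \<inter> ?A' \<times> ?A')" using Ecf by auto
      show "\<forall>a\<in>E - S'. \<forall>b. (b, a) \<in> snd (?A', R \<inter> ?A' \<times> ?A') \<longrightarrow>
          (\<exists>c\<in>E - S'. (c, b) \<in> snd (?A', R \<inter> ?A' \<times> ?A'))"
      proof (intro ballI allI impI)
        fix a b assume a: "a \<in> E - S'" and ba: "(b, a) \<in> snd (?A', R \<inter> ?A' \<times> ?A')"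
        then have ba': "(b,a) \<in> R" "b \<in> ?A'" by auto
        then obtain c where c: "c \<in> E" "(c,b) \<in> R" using Edef a by blast
        have "c \<notin> S'" using c ba'(2) unfolding plus_of_def by blast
        then have "c \<in> ?A'" using c sub by blast
        then show "\<exists>c\<in>E - S'. (c, b) \<in> snd (?A', R \<inter> ?A' \<times> ?A')"
          using c ba'(2) \<open>c \<notin> S'\<close> by auto
      qed
    qed
    have cover: "(E - S') \<union> plus_of (snd (reduct G S')) (E - S') = fst (reduct G S')"
    proof
      show "(E - S') \<union> plus_of (snd (reduct G S')) (E - S') \<subseteq> fst (reduct G S')"
        using sub unfolding r plus_of_def by auto
      show "fst (reduct G S') \<subseteq> (E - S') \<union> plus_of (snd (reduct G S')) (E - S')"
      proof
        fix x assume x: "x \<in> fst (reduct G S')"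
        then have xA: "x \<in> ?A'" unfolding r by simp
        show "x \<in> (E - S') \<union> plus_of (snd (reduct G S')) (E - S')"
        proof (cases "x \<in> E")
          case True then show ?thesis using xA by blast
        next
          case False
          then obtain b where b: "b \<in> E" "(b,x) \<in> R" using xA E(2) unfolding plus_of_def by blast
          have "b \<notin> S'" using b xA unfolding plus_of_def by blast
          then have "b \<in> ?A'" using b sub by blast
          then show ?thesis using b xA \<open>b \<notin> S'\<close> unfolding r plus_of_def by auto
        qed
      qed
    qed
    have "E - S' \<in> stable (reduct G S')" unfolding stable_def using adm cover by simp
    then have "(step alpha_adm)\<^sup>*\<^sup>* (reduct G S', S \<union> S') (({},{}), (S \<union> S') \<union> (E - S'))"
      using less.hyps[OF card isaf] by blast
    moreover have "(S \<union> S') \<union> (E - S') = S \<union> E" using S'(1) by blast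
    ultimately show ?thesis using st by (metis converse_rtranclp_into_rtranclp)
  qed
qed

theorem theorem5:
  shows "serialisable (stable :: 'a AF \<Rightarrow> 'a set set) alpha_adm beta_st"
  unfolding serialisable_def
proof (intro allI impI)
  fix F :: "'a AF" assume F: "is_AF F"
  show "stable F = serial_ext alpha_adm beta_st F"
  proof
    show "stable F \<subseteq> serial_ext alpha_adm beta_st F"
    proof
      fix E assume "E \<in> stable F"
      from complete[OF F this, of "{}"] show "E \<in> serial_ext alpha_adm beta_st F"
        unfolding serial_ext_def beta_st_def by auto
    qed
    show "serial_ext alpha_adm beta_st F \<subseteq> stable F"
    proof
      fix S assume "S \<in> serial_ext alpha_adm beta_st F"
      then obtain F' where p: "(step alpha_adm)\<^sup>*\<^sup>* (F, {}) (F', S)" "F' = ({},{})"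
        unfolding serial_ext_def beta_st_def by blast
      from sound[OF p(1) F] p(2) have r: "reduct F S = ({},{})" and a: "admissible F S" by auto
      obtain A R where FA: "F = (A,R)" by (cases F)
      have RA: "R \<subseteq> A \<times> A" using F unfolding is_AF_def FA by simp
      have SA: "S \<subseteq> A" using a unfolding admissible_def FA by simp
      have "A - (S \<union> plus_of R S) = {}" using r unfolding reduct_def FA Let_def by simp
      moreover have "plus_of R S \<subseteq> A" using RA unfolding plus_of_def by auto
      ultimately have "S \<union> plus_of R S = A" using SA by blast
      then show "S \<in> stable F" unfolding stable_def using a FA by simp
    qed
  qed
qed

end
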